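(* Let $\mathbf c\in\mathbb N^\infty$ with $\|\mathbf c\|\ge2$. Then $$\frac{(|\mathbf c|+\|\mathbf c\|-3)!}{(|\mathbf c|-1)!}\,(\|\mathbf c\|-1)=\frac12\sum_{\substack{\mathbf c=\mathbf a+\mathbf b\\ \mathbf a,\mathbf b\ne0}}\binom{\mathbf c}{\mathbf a,\mathbf b}\frac{(|\mathbf a|+\|\mathbf a\|-2)!\,(|\mathbf b|+\|\mathbf b\|-2)!}{(|\mathbf a|-1)!\,(|\mathbf b|-1)!},$$ the sum running over $\mathbf a,\mathbf b\in\mathbb N^\infty$.
   Context: $\mathbb N^\infty$ is the set of sequences $\mathbf d=(d_1,d_2,\dots)$ of nonnegative integers, almost all zero, with componentwise addition; $|\mathbf d|=\sum_iid_i$, $\|\mathbf d\|=\sum_id_i$, and $\binom{\mathbf c}{\mathbf a,\mathbf b}=\prod_{i\ge1}\frac{c_i!}{a_i!\,b_i!}$. *)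

theory Defs
  imports Complex_Main
begin

text \<open>Elements of N^infinity are represented as functions d :: nat => nat with
  finite support, where only indices i >= 1 are used (d 0 = 0).\<close>

definition Ninf :: "(nat \<Rightarrow> nat) set" where
  "Ninf = {d. d 0 = 0 \<and> finite {i. d i \<noteq> 0}}"

definition supp :: "(nat \<Rightarrow> nat) \<Rightarrow> nat set" where
  "supp d = {i. d i \<noteq> 0}"

text \<open>|d| = sum_i i d_i\<close>
definition wt :: "(nat \<Rightarrow> nat) \<Rightarrow> nat" where
  "wt d = (\<Sum>i\<in>supp d. i * d i)"

text \<open>||d|| = sum_i d_i\<close>
definition len :: "(nat \<Rightarrow> nat) \<Rightarrow> nat" where
  "len d = (\<Sum>i\<in>supp d. d i)"

definition multibinom :: "(nat \<Rightarrow> nat) \<Rightarrow> (nat \<Rightarrow> nat) \<Rightarrow> (nat \<Rightarrow> nat) \<Rightarrow> real" where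
  "multibinom c a b = (\<Prod>i\<in>supp c. fact (c i) / (fact (a i) * fact (b i)))"

end

theory Submission
  imports Defs
begin

lemma poch_fact:
  assumes "w \<ge> 1"
  shows "pochhammer (real w) k = fact (w + k - 1) / fact (w - 1)"
proof -
  have "fact (w - 1 + k) = (pochhammer 1 (w - 1 + k) :: real)" by (simp add: pochhammer_fact)
  also have "\<dots> = pochhammer 1 (w-1) * pochhammer (1 + real (w - 1)) k"
    by (simp add: pochhammer_product')
  also have "1 + real (w - 1) = real w" using assms by simp
  finally have "fact (w - 1 + k) = fact (w - 1) * (pochhammer (real w) k :: real)"
    by (simp add: pochhammer_fact)
  moreover have "w - 1 + k = w + k - 1" using assms by simp
  ultimately show ?thesis by (simp add: field_simps)
qed

lemma supp_sub: "supp a \<subseteq> J \<Longrightarrow> finite J \<Longrightarrow> len a = (\<Sum>i\<in>J. a i)"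
  unfolding len_def by (rule sum.mono_neutral_left) (auto simp: supp_def)

lemma supp_sub_wt: "supp a \<subseteq> J \<Longrightarrow> finite J \<Longrightarrow> wt a = (\<Sum>i\<in>J. i * a i)"
  unfolding wt_def by (rule sum.mono_neutral_left) (auto simp: supp_def)

definition FF :: "real \<Rightarrow> (nat \<Rightarrow> nat) \<Rightarrow> real" where
  "FF x a = (if len a = 0 then 1 else x * pochhammer (x + real (wt a) + 1) (len a - 1))"

lemma len_dec:
  assumes "finite J" "supp a \<subseteq> J" "i \<in> J" "a i \<ge> 1"
  shows "len (a(i := a i - 1)) = len a - 1" "wt (a(i := a i - 1)) = wt a - i"
    "i \<le> wt a" "1 \<le> len a"
proof -
  have s: "supp (a(i := a i - 1)) \<subseteq> J" using assms(2,3) by (auto simp: supp_def)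
  have "len (a(i := a i - 1)) = (\<Sum>j\<in>J. (a(i := a i - 1)) j)" using supp_sub[OF s assms(1)] .
  also have "\<dots> = (a i - 1) + (\<Sum>j\<in>J-{i}. a j)" using assms by (simp add: sum.remove)
  also have "len a = a i + (\<Sum>j\<in>J-{i}. a j)" using assms supp_sub[OF assms(2,1)] by (simp add: sum.remove)
  ultimately show "len (a(i := a i - 1)) = len a - 1" "1 \<le> len a" using assms(4) by auto
  have "wt (a(i := a i - 1)) = (\<Sum>j\<in>J. j * (a(i := a i - 1)) j)" using supp_sub_wt[OF s assms(1)] .
  also have "\<dots> = i * (a i - 1) + (\<Sum>j\<in>J-{i}. j * a j)" using assms by (simp add: sum.remove)
  also have "wt a = i * a i + (\<Sum>j\<in>J-{i}. j * a j)" using assms supp_sub_wt[OF assms(2,1)] by (simp add: sum.remove)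
  moreover have "i * a i = i * (a i - 1) + i" using assms(4)
    by (metis add.commute le_add_diff_inverse mult.right_neutral distrib_left)
  ultimately show "wt (a(i := a i - 1)) = wt a - i" "i \<le> wt a" by auto
qed

lemma nabla:
  assumes "finite J" "supp a \<subseteq> J"
  shows "FF x a - FF (x - 1) a = (\<Sum>i\<in>J. real (a i) * FF (x + real i) (a(i := a i - 1)))"
proof -
  have L: "len a = (\<Sum>i\<in>J. a i)" using supp_sub[OF assms(2,1)] .
  have W: "wt a = (\<Sum>i\<in>J. i * a i)" using supp_sub_wt[OF assms(2,1)] .
  consider "len a = 0" | "len a = 1" | "len a \<ge> 2" by linarith
  then show ?thesis
  proof cases
    case 1
    then have "\<forall>i\<in>J. a i = 0" using L assms(1) by simp
    then show ?thesis using 1 by (simp add: FF_def)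
  next
    case 2
    have "(\<Sum>i\<in>J. real (a i) * FF (x + real i) (a(i := a i - 1))) = (\<Sum>i\<in>J. real (a i))"
    proof (rule sum.cong)
      fix i assume i: "i \<in> J"
      show "real (a i) * FF (x + real i) (a(i := a i - 1)) = real (a i)"
      proof (cases "a i = 0")
        case False
        then have "len (a(i := a i - 1)) = 0" using len_dec[OF assms i] 2 by simp
        then show ?thesis by (simp add: FF_def)
      qed simp
    qed simp
    also have "\<dots> = real (len a)" using L by simp
    finally show ?thesis using 2 by (simp add: FF_def)
  next
    case 3
    define P where "P = pochhammer (x + real (wt a) + 1) (len a - 2)"
    have "(\<Sum>i\<in>J. real (a i) * FF (x + real i) (a(i := a i - 1))) = (\<Sum>i\<in>J. real (a i) * (x + real i) * P)"
    proof (rule sum.cong)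
      fix i assume i: "i \<in> J"
      show "real (a i) * FF (x + real i) (a(i := a i - 1)) = real (a i) * (x + real i) * P"
      proof (cases "a i = 0")
        case False
        then have d: "len (a(i := a i - 1)) = len a - 1" "wt (a(i := a i - 1)) = wt a - i" "i \<le> wt a"
          using len_dec[OF assms i] by auto
        have "x + real i + real (wt a - i) + 1 = x + real (wt a) + 1" using d(3) by (simp add: of_nat_diff)
        moreover have "len a - 1 - 1 = len a - 2" by simp
        ultimately show ?thesis using d 3 by (simp add: FF_def P_def)
      qed simp
    qed simp
    also have "\<dots> = (real (len a) * x + real (wt a)) * P"
    proof -
      have "(\<Sum>i\<in>J. real (a i) * (x + real i) * P) = (x * (\<Sum>i\<in>J. real (a i)) + (\<Sum>i\<in>J. real (i * a i))) * P"
        by (simp add: sum_distrib_right sum_distrib_left algebra_simps sum.distrib)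
      also have "\<dots> = (real (len a) * x + real (wt a)) * P" using L W by (simp add: algebra_simps)
      finally show ?thesis .
    qed
    finally have R: "(\<Sum>i\<in>J. real (a i) * FF (x + real i) (a(i := a i - 1))) = (real (len a) * x + real (wt a)) * P" .
    have e: "len a - 1 = Suc (len a - 2)" using 3 by simp
    have p1: "pochhammer (x + real (wt a) + 1) (len a - 1) = (x + real (wt a) + 1 + real (len a - 2)) * P"
      unfolding e P_def by (rule pochhammer_rec')
    have p2: "pochhammer (x - 1 + real (wt a) + 1) (len a - 1) = (x + real (wt a)) * P"
      unfolding e P_def by (simp add: pochhammer_rec)
    have r2: "real (len a - 2) = real (len a) - 2" using 3 by (simp add: of_nat_diff)
    have "FF x a - FF (x - 1) a = x * pochhammer (x + real (wt a) + 1) (len a - 1)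
       - (x - 1) * pochhammer (x - 1 + real (wt a) + 1) (len a - 1)"
      using 3 by (simp add: FF_def)
    also have "\<dots> = (real (len a) * x + real (wt a)) * P"
      unfolding p1 p2 r2 by (simp add: algebra_simps)
    finally show ?thesis unfolding R .
  qed
qed

definition D :: "(nat \<Rightarrow> nat) \<Rightarrow> (nat \<Rightarrow> nat) set" where
  "D c = {a. \<forall>i. a i \<le> c i}"

definition CB :: "(nat \<Rightarrow> nat) \<Rightarrow> (nat \<Rightarrow> nat) \<Rightarrow> real" where
  "CB c a = (\<Prod>i\<in>supp c. real (c i choose a i))"

lemma supp_D: "a \<in> D c \<Longrightarrow> supp a \<subseteq> supp c"
proof
  fix i assume a: "a \<in> D c" and i: "i \<in> supp a"
  have "a i \<le> c i" using a by (simp add: D_def)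
  then show "i \<in> supp c" using i by (simp add: supp_def)
qed

lemma finite_D: assumes "finite (supp c)" shows "finite (D c)"
proof -
  have "D c \<subseteq> {f. \<forall>x. (x \<in> supp c \<longrightarrow> f x \<in> {..len c}) \<and> (x \<notin> supp c \<longrightarrow> f x = 0)}"
  proof (intro subsetI CollectI allI conjI impI)
    fix f x assume f: "f \<in> D c"
    { assume "x \<in> supp c"
      then have "c x \<le> len c" unfolding len_def using assms by (intro member_le_sum) auto
      then show "f x \<in> {..len c}" using f by (auto simp: D_def intro: order_trans) }
    { assume "x \<notin> supp c" moreover have "f x \<le> c x" using f by (simp add: D_def)
      ultimately show "f x = 0" by (simp add: supp_def) }
  qed
  moreover have "finite {f. \<forall>x. (x \<in> supp c \<longrightarrow> f x \<in> {..len c}) \<and> (x \<notin> supp c \<longrightarrow> f x = (0::nat))}"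
    by (rule finite_set_of_finite_funs) (use assms in auto)
  ultimately show ?thesis by (rule finite_subset)
qed

lemma CB_J: assumes "finite J" "supp c \<subseteq> J" "a \<in> D c"
  shows "CB c a = (\<Prod>j\<in>J. real (c j choose a j))"
  unfolding CB_def
proof (rule prod.mono_neutral_left[OF assms(1,2)])
  show "\<forall>i\<in>J - supp c. real (c i choose a i) = 1"
  proof
    fix i assume "i \<in> J - supp c"
    moreover have "a i \<le> c i" using assms(3) by (simp add: D_def)
    ultimately show "real (c i choose a i) = 1" by (simp add: supp_def)
  qed
qed

lemma reindex:
  assumes fin: "finite (supp c)" and ci: "c i \<ge> 1"
  shows "(\<Sum>a\<in>D c. CB c a * real (a i) * h (a(i := a i - 1)) (\<lambda>j. c j - a j))
    = real (c i) * (\<Sum>a\<in>D (c(i := c i - 1)). CB (c(i := c i - 1)) a * h a (\<lambda>j. (c(i := c i - 1)) j - a j))"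
proof -
  define c' where "c' = c(i := c i - 1)"
  define \<sigma> where "\<sigma> = (\<lambda>a::nat\<Rightarrow>nat. a(i := Suc (a i)))"
  have iS: "i \<in> supp c" using ci by (auto simp: supp_def)
  have sc': "supp c' \<subseteq> supp c" by (auto simp: supp_def c'_def)
  have inj: "inj_on \<sigma> (D c')"
  proof (rule inj_onI)
    fix a b assume h: "\<sigma> a = \<sigma> b"
    show "a = b"
    proof
      fix j from fun_cong[OF h, of j] show "a j = b j" by (cases "j = i") (auto simp: \<sigma>_def)
    qed
  qed
  have img: "\<sigma> ` D c' = {b \<in> D c. b i \<ge> 1}"
  proof safe
    fix a assume "a \<in> D c'"
    then have "\<forall>j. a j \<le> c' j" by (simp add: D_def)
    have "\<forall>j. \<sigma> a j \<le> c j"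
    proof
      fix j show "\<sigma> a j \<le> c j"
      proof (cases "j = i")
        case True then show ?thesis using \<open>\<forall>j. a j \<le> c' j\<close>[rule_format, of i] ci
          by (simp add: \<sigma>_def c'_def)
      next
        case False then show ?thesis using \<open>\<forall>j. a j \<le> c' j\<close>[rule_format, of j]
          by (simp add: \<sigma>_def c'_def)
      qed
    qed
    then show "\<sigma> a \<in> D c" "1 \<le> \<sigma> a i" by (auto simp: D_def \<sigma>_def)
  next
    fix b assume b: "b \<in> D c" "1 \<le> b i"
    have "b = \<sigma> (b(i := b i - 1))" using b(2) by (auto simp: \<sigma>_def)
    moreover have "b(i := b i - 1) \<in> D c'" using b by (auto simp: D_def c'_def diff_le_mono)
    ultimately show "b \<in> \<sigma> ` D c'" by blast
  qed
  have finD: "finite (D c)" using finite_D[OF fin] .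
  have "(\<Sum>a\<in>D c. CB c a * real (a i) * h (a(i := a i - 1)) (\<lambda>j. c j - a j))
     = (\<Sum>a\<in>{b \<in> D c. b i \<ge> 1}. CB c a * real (a i) * h (a(i := a i - 1)) (\<lambda>j. c j - a j))"
    by (rule sum.mono_neutral_right[OF finD]) auto
  also have "\<dots> = (\<Sum>a\<in>D c'. CB c (\<sigma> a) * real (\<sigma> a i) * h ((\<sigma> a)(i := \<sigma> a i - 1)) (\<lambda>j. c j - \<sigma> a j))"
    unfolding img[symmetric] by (rule sum.reindex[OF inj, unfolded comp_def])
  also have "\<dots> = (\<Sum>a\<in>D c'. real (c i) * (CB c' a * h a (\<lambda>j. c' j - a j)))"
  proof (rule sum.cong[OF refl])
    fix a assume a: "a \<in> D c'"
    have sa: "\<sigma> a \<in> D c" using img a by blast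
    have e1: "(\<sigma> a)(i := \<sigma> a i - 1) = a" by (auto simp: \<sigma>_def)
    have e2: "(\<lambda>j. c j - \<sigma> a j) = (\<lambda>j. c' j - a j)" by (auto simp: \<sigma>_def c'_def)
    have C1: "CB c (\<sigma> a) = real (c i choose Suc (a i)) * (\<Prod>j\<in>supp c - {i}. real (c j choose a j))"
      unfolding CB_def using fin iS by (simp add: prod.remove \<sigma>_def)
    have C2: "CB c' a = real (c i - 1 choose a i) * (\<Prod>j\<in>supp c - {i}. real (c j choose a j))"
      using CB_J[OF fin sc' a] fin iS by (simp add: prod.remove c'_def)
    have B: "(c i choose Suc (a i)) * Suc (a i) = c i * (c i - 1 choose a i)"
      using Suc_times_binomial_eq[of "c i - 1" "a i"] ci by simp
    have "CB c (\<sigma> a) * real (\<sigma> a i) = real (c i) * CB c' a"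
    proof -
      have "real (c i choose Suc (a i)) * real (Suc (a i)) = real (c i) * real (c i - 1 choose a i)"
        using B by (metis of_nat_mult)
      then have "CB c (\<sigma> a) * real (\<sigma> a i) = (real (c i) * real (c i - 1 choose a i)) * (\<Prod>j\<in>supp c - {i}. real (c j choose a j))"
        unfolding C1 by (simp add: \<sigma>_def)
      then show ?thesis unfolding C2 by simp
    qed
    then show "CB c (\<sigma> a) * real (\<sigma> a i) * h ((\<sigma> a)(i := \<sigma> a i - 1)) (\<lambda>j. c j - \<sigma> a j)
      = real (c i) * (CB c' a * h a (\<lambda>j. c' j - a j))" unfolding e1 e2 by simp
  qed
  finally show ?thesis unfolding c'_def by (simp add: sum_distrib_left)
qed

lemma conv:
  assumes "finite (supp c)"
  shows "(\<Sum>a\<in>D c. CB c a * FF (real_of_int k) a * FF y (\<lambda>j. c j - a j)) = FF (real_of_int k + y) c"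
  using assms
proof (induction "len c" arbitrary: c k y rule: less_induct)
  case less
  note fin = less.prems
  have finD: "finite (D c)" using finite_D[OF fin] .
  define g where "g k = (\<Sum>a\<in>D c. CB c a * FF (real_of_int k) a * FF y (\<lambda>j. c j - a j)) - FF (real_of_int k + y) c" for k :: int
  have step: "g k = g (k - 1)" for k
  proof -
    define x where "x = real_of_int k"
    have xm: "real_of_int (k - 1) = x - 1" by (simp add: x_def)
    have "(\<Sum>a\<in>D c. CB c a * FF x a * FF y (\<lambda>j. c j - a j)) - (\<Sum>a\<in>D c. CB c a * FF (x - 1) a * FF y (\<lambda>j. c j - a j))
       = (\<Sum>a\<in>D c. CB c a * (FF x a - FF (x - 1) a) * FF y (\<lambda>j. c j - a j))"
      by (simp add: sum_subtractf[symmetric] algebra_simps)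
    also have "\<dots> = (\<Sum>a\<in>D c. \<Sum>i\<in>supp c. CB c a * real (a i) * (FF (x + real i) (a(i := a i - 1)) * FF y (\<lambda>j. c j - a j)))"
    proof (rule sum.cong[OF refl])
      fix a assume a: "a \<in> D c"
      show "CB c a * (FF x a - FF (x - 1) a) * FF y (\<lambda>j. c j - a j) =
        (\<Sum>i\<in>supp c. CB c a * real (a i) * (FF (x + real i) (a(i := a i - 1)) * FF y (\<lambda>j. c j - a j)))"
        unfolding nabla[OF fin supp_D[OF a]] by (simp add: sum_distrib_left sum_distrib_right algebra_simps)
    qed
    also have "\<dots> = (\<Sum>i\<in>supp c. \<Sum>a\<in>D c. CB c a * real (a i) * (FF (x + real i) (a(i := a i - 1)) * FF y (\<lambda>j. c j - a j)))"
      by (rule sum.swap)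
    also have "\<dots> = (\<Sum>i\<in>supp c. real (c i) * FF (x + y + real i) (c(i := c i - 1)))"
    proof (rule sum.cong[OF refl])
      fix i assume i: "i \<in> supp c"
      then have ci: "c i \<ge> 1" by (simp add: supp_def)
      have lt: "len (c(i := c i - 1)) < len c" using len_dec[OF fin subset_refl i ci] by simp
      have fin': "finite (supp (c(i := c i - 1)))"
        by (rule finite_subset[OF _ fin]) (auto simp: supp_def)
      have "(\<Sum>a\<in>D c. CB c a * real (a i) * (FF (x + real i) (a(i := a i - 1)) * FF y (\<lambda>j. c j - a j)))
        = real (c i) * (\<Sum>a\<in>D (c(i := c i - 1)). CB (c(i := c i - 1)) a * (FF (x + real i) a * FF y (\<lambda>j. (c(i := c i - 1)) j - a j)))"
        by (rule reindex[OF fin ci, where h = "\<lambda>a b. FF (x + real i) a * FF y b"])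
      also have "\<dots> = real (c i) * FF (real_of_int (k + int i) + y) (c(i := c i - 1))"
        using less.hyps[OF lt fin', of "k + int i" y] by (simp add: x_def mult.assoc)
      also have "\<dots> = real (c i) * FF (x + y + real i) (c(i := c i - 1))"
        by (simp add: x_def add_ac)
      finally show "(\<Sum>a\<in>D c. CB c a * real (a i) * (FF (x + real i) (a(i := a i - 1)) * FF y (\<lambda>j. c j - a j)))
        = real (c i) * FF (x + y + real i) (c(i := c i - 1))" .
    qed
    also have "\<dots> = FF (x + y) c - FF (x + y - 1) c"
      using nabla[OF fin subset_refl, of "x + y"] by simp
    finally show ?thesis unfolding g_def xm x_def[symmetric] by (simp add: algebra_simps)
  qed
  have g0: "g 0 = 0"
  proof -
    have z: "(\<lambda>_. 0::nat) \<in> D c" by (simp add: D_def)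
    have "(\<Sum>a\<in>D c. CB c a * FF 0 a * FF y (\<lambda>j. c j - a j)) = CB c (\<lambda>_. 0) * FF 0 (\<lambda>_. 0) * FF y (\<lambda>j. c j - 0)
       + (\<Sum>a\<in>D c - {\<lambda>_. 0}. CB c a * FF 0 a * FF y (\<lambda>j. c j - a j))"
      using sum.remove[OF finD z, where g = "\<lambda>a. CB c a * FF 0 a * FF y (\<lambda>j. c j - a j)"] by simp
    also have "(\<Sum>a\<in>D c - {\<lambda>_. 0}. CB c a * FF 0 a * FF y (\<lambda>j. c j - a j)) = 0"
    proof (rule sum.neutral, intro ballI)
      fix a assume a: "a \<in> D c - {\<lambda>_. 0}"
      have "len a \<noteq> 0"
      proof
        assume l: "len a = 0"
        have "finite (supp a)" using finite_subset[OF supp_D fin] a by blast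
        then have "\<forall>i\<in>supp a. a i = 0" using l by (simp add: len_def)
        then have "a = (\<lambda>_. 0)" by (auto simp: supp_def)
        then show False using a by simp
      qed
      then show "CB c a * FF 0 a * FF y (\<lambda>j. c j - a j) = 0" by (simp add: FF_def)
    qed
    also have "CB c (\<lambda>_. 0) = 1" by (simp add: CB_def)
    also have "FF 0 (\<lambda>_. 0) = 1" by (simp add: FF_def len_def supp_def)
    finally show ?thesis by (simp add: g_def)
  qed
  have "g i = 0" for i
  proof (induction i rule: int_induct[where k = 0])
    case base show ?case by (rule g0)
  next
    case (step1 i) then show ?case using step[of "i + 1"] by simp
  next
    case (step2 i) then show ?case using step[of i] by simp
  qed
  then show ?case by (simp add: g_def)
qed

lemma len_le_wt: assumes "a 0 = 0" "finite (supp a)" shows "len a \<le> wt a"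
  unfolding len_def wt_def
proof (rule sum_mono)
  fix i assume "i \<in> supp a"
  then have "i \<ge> 1" using assms(1) by (cases i) (auto simp: supp_def)
  then show "a i \<le> i * a i" by simp
qed

lemma len_pos: assumes "finite (supp a)" "a \<noteq> (\<lambda>_. 0)" shows "len a \<ge> 1"
proof -
  obtain i where i: "a i \<noteq> 0" using assms(2) by auto
  then have "a i \<le> len a" unfolding len_def using assms(1) by (intro member_le_sum) (auto simp: supp_def)
  then show ?thesis using i by simp
qed

lemma FFm1: assumes "a 0 = 0" "finite (supp a)" "a \<noteq> (\<lambda>_. 0)"
  shows "FF (-1) a = - (fact (wt a + len a - 2) / fact (wt a - 1))"
proof -
  have l: "len a \<ge> 1" using len_pos[OF assms(2,3)] .
  have w: "wt a \<ge> 1" using l len_le_wt[OF assms(1,2)] by simp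
  have "FF (-1) a = - pochhammer (real (wt a)) (len a - 1)" using l by (simp add: FF_def)
  also have "\<dots> = - (fact (wt a + (len a - 1) - 1) / fact (wt a - 1))" using poch_fact[OF w] by simp
  also have "wt a + (len a - 1) - 1 = wt a + len a - 2" using l by simp
  finally show ?thesis .
qed

theorem propositionA2:
  fixes c :: "nat \<Rightarrow> nat"
  assumes "c \<in> Ninf" and "len c \<ge> 2"
  shows "fact (wt c + len c - 3) / fact (wt c - 1) * (real (len c) - 1)
    = 1/2 * (\<Sum>(a, b)\<in>{(a, b). a \<in> Ninf \<and> b \<in> Ninf \<and> (\<forall>i. c i = a i + b i) \<and> a \<noteq> (\<lambda>_. 0) \<and> b \<noteq> (\<lambda>_. 0)}.
        multibinom c a b * (fact (wt a + len a - 2) * fact (wt b + len b - 2))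
          / (fact (wt a - 1) * fact (wt b - 1)))"
proof -
  have c0: "c 0 = 0" and fin: "finite (supp c)" using assms(1) by (auto simp: Ninf_def supp_def)
  define w where "w = wt c"
  define l where "l = len c"
  have l2: "l \<ge> 2" using assms(2) by (simp add: l_def)
  have wl: "l \<le> w" using len_le_wt[OF c0 fin] by (simp add: l_def w_def)
  define gg where "gg a = fact (wt a + len a - 2) / (fact (wt a - 1) :: real)" for a :: "nat \<Rightarrow> nat"
  define P where "P = pochhammer (real w) (l - 2)"
  have P: "P = fact (w + l - 3) / fact (w - 1)"
  proof -
    have "P = fact (w + (l - 2) - 1) / fact (w - 1)" unfolding P_def using wl l2 by (intro poch_fact) simp
    also have "w + (l - 2) - 1 = w + l - 3" using l2 by simp
    finally show ?thesis .
  qed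
  have e: "l - 1 = Suc (l - 2)" using l2 by simp
  have cnz: "c \<noteq> (\<lambda>_. 0)" using l2 by (auto simp: l_def len_def)
  have ggc: "gg c = (real w + real l - 2) * P"
  proof -
    have "FF (-1) c = - pochhammer (real w) (l - 1)" using l2 by (simp add: FF_def w_def l_def)
    also have "\<dots> = - ((real w + real (l - 2)) * P)" unfolding e P_def by (rule arg_cong[OF pochhammer_rec'])
    finally have "FF (-1) c = - ((real w + real l - 2) * P)" using l2 by (simp add: of_nat_diff)
    then show ?thesis using FFm1[OF c0 fin cnz] by (simp add: gg_def)
  qed
  have FF2: "FF (-2) c = -2 * (real w - 1) * P"
  proof -
    have "FF (-2) c = -2 * pochhammer (real w - 1) (l - 1)" using l2 by (simp add: FF_def w_def l_def)
    also have "\<dots> = -2 * ((real w - 1) * P)" unfolding e P_def by (simp add: pochhammer_rec)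
    finally show ?thesis by (simp add: algebra_simps)
  qed
  have conv1: "(\<Sum>a\<in>D c. CB c a * FF (-1) a * FF (-1) (\<lambda>j. c j - a j)) = FF (-2) c"
    using conv[OF fin, of "-1" "-1"] by simp
  define h where "h a = CB c a * FF (-1) a * FF (-1) (\<lambda>j. c j - a j)" for a
  have finD: "finite (D c)" using finite_D[OF fin] .
  have z: "(\<lambda>_. 0) \<in> D c" and cc: "c \<in> D c" by (auto simp: D_def)
  have FF0: "FF x (\<lambda>_. 0) = 1" for x by (simp add: FF_def len_def supp_def)
  have h0: "h (\<lambda>_. 0) = - gg c"
    using FFm1[OF c0 fin cnz] by (simp add: h_def CB_def FF0 gg_def)
  have hc: "h c = - gg c"
    using FFm1[OF c0 fin cnz] by (simp add: h_def CB_def FF0 gg_def)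
  have mem: "a \<in> D c \<Longrightarrow> a 0 = 0 \<and> finite (supp a)" for a
  proof -
    assume aD: "a \<in> D c"
    then have "a 0 \<le> c 0" by (simp add: D_def)
    then show ?thesis using c0 finite_subset[OF supp_D[OF aD] fin] by simp
  qed
  have sub: "a \<in> D c \<Longrightarrow> (\<lambda>j. c j - a j) 0 = 0 \<and> finite (supp (\<lambda>j. c j - a j))" for a
    using c0 by (auto intro!: finite_subset[OF _ fin] simp: supp_def)
  define R where "R = D c - {\<lambda>_. 0, c}"
  have hR: "a \<in> R \<Longrightarrow> h a = CB c a * gg a * gg (\<lambda>j. c j - a j)" for a
  proof -
    assume a: "a \<in> R"
    then have aD: "a \<in> D c" and an: "a \<noteq> (\<lambda>_. 0)" and ac: "a \<noteq> c" by (auto simp: R_def)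
    have bn: "(\<lambda>j. c j - a j) \<noteq> (\<lambda>_. 0)"
    proof
      assume "(\<lambda>j. c j - a j) = (\<lambda>_. 0)"
      then have "\<forall>j. c j - a j = 0" by metis
      then have "a = c" using aD by (auto simp: D_def intro!: ext intro: antisym)
      then show False using ac by simp
    qed
    show ?thesis using FFm1[OF conjunct1[OF mem[OF aD]] conjunct2[OF mem[OF aD]] an]
        FFm1[OF conjunct1[OF sub[OF aD]] conjunct2[OF sub[OF aD]] bn]
      by (simp add: h_def gg_def)
  qed
  have "sum h (D c) = h (\<lambda>_. 0) + h c + sum h R"
  proof -
    have "sum h (D c) = h (\<lambda>_. 0) + sum h (D c - {\<lambda>_. 0})" using sum.remove[OF finD z] .
    also have "sum h (D c - {\<lambda>_. 0}) = h c + sum h (D c - {\<lambda>_. 0} - {c})"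
      using sum.remove[of "D c - {\<lambda>_. 0}" c h] finD cc cnz by (simp add: eq_commute)
    finally show ?thesis by (simp add: R_def Diff_insert2[symmetric] insert_commute)
  qed
  then have T: "sum h R = 2 * (real l - 1) * P"
    using conv1 h0 hc ggc FF2 unfolding h_def[symmetric] by (simp add: algebra_simps)
  define S where "S = {(a, b). a \<in> Ninf \<and> b \<in> Ninf \<and> (\<forall>i. c i = a i + b i) \<and> a \<noteq> (\<lambda>_. 0) \<and> b \<noteq> (\<lambda>_. 0)}"
  have Seq: "S = (\<lambda>a. (a, \<lambda>j. c j - a j)) ` R"
  proof safe
    fix a b assume ab: "(a, b) \<in> S"
    then have an: "a \<in> Ninf" "b \<in> Ninf" "\<forall>i. c i = a i + b i" "a \<noteq> (\<lambda>_. 0)" "b \<noteq> (\<lambda>_. 0)"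
      by (auto simp: S_def)
    have bb: "b = (\<lambda>j. c j - a j)" using an(3) by (auto intro!: ext)
    have "a \<in> D c" using an(3) by (auto simp: D_def)
    moreover have "a \<noteq> c"
    proof
      assume "a = c"
      then have "b = (\<lambda>_. 0)" using an(3) by (auto intro!: ext)
      then show False using an(5) by simp
    qed
    ultimately have "a \<in> R" using an(4) by (auto simp: R_def)
    then show "(a, b) \<in> (\<lambda>a. (a, \<lambda>j. c j - a j)) ` R" using bb by blast
  next
    fix a assume a: "a \<in> R"
    then have aD: "a \<in> D c" and an: "a \<noteq> (\<lambda>_. 0)" and ac: "a \<noteq> c" by (auto simp: R_def)
    have bn: "(\<lambda>j. c j - a j) \<noteq> (\<lambda>_. 0)"
    proof
      assume "(\<lambda>j. c j - a j) = (\<lambda>_. 0)"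
      then have "\<forall>j. c j - a j = 0" by metis
      then have "a = c" using aD by (auto simp: D_def intro!: ext intro: antisym)
      then show False using ac by simp
    qed
    have "a \<in> Ninf" using mem[OF aD] unfolding Ninf_def supp_def by blast
    moreover have "(\<lambda>j. c j - a j) \<in> Ninf" using sub[OF aD] unfolding Ninf_def supp_def by blast
    moreover have "\<forall>i. c i = a i + (c i - a i)" using aD by (simp add: D_def)
    ultimately show "(a, \<lambda>j. c j - a j) \<in> S" using an bn unfolding S_def by blast
  qed
  have inj: "inj_on (\<lambda>a. (a, \<lambda>j. c j - a j)) R" by (auto simp: inj_on_def)
  have sumS: "(\<Sum>(a, b)\<in>S. multibinom c a b * (fact (wt a + len a - 2) * fact (wt b + len b - 2))
          / (fact (wt a - 1) * fact (wt b - 1))) = sum h R"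
    unfolding Seq sum.reindex[OF inj] comp_def
  proof (rule sum.cong[OF refl], goal_cases)
    case (1 a)
    then have a: "a \<in> R" .
    then have aD: "a \<in> D c" by (simp add: R_def)
    have "multibinom c a (\<lambda>j. c j - a j) = CB c a"
      unfolding multibinom_def CB_def
      by (rule prod.cong[OF refl]) (use aD in \<open>simp add: D_def binomial_fact\<close>)
    then show ?case
      using hR[OF a] by (simp add: gg_def)
  qed
  show ?thesis
    unfolding S_def[symmetric] sumS T P w_def l_def by (simp add: field_simps)
qed

end
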